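(* Let $p>2$ be prime, $q$ a power of $p$, $Q\in\mathbb{F}_q[x]$ a nonzero squarefree polynomial and $r\ge1$ an integer. Then $$\#\{c\in\mathbb{F}_q[x]:\deg c\le r,\ Q\mid c'\}\le\begin{cases}q^{\frac r2+\left(\frac12-\frac1p\right)(r-2\deg Q)+2p},&\deg Q<r<2\deg Q,\\ q^{\frac r2+\frac12(r-2\deg Q)+2p},&r\ge2\deg Q,\end{cases}$$ where $c'$ denotes the formal derivative of $c$. *)

theory Defs
  imports Complex_Main "HOL-Computational_Algebra.Computational_Algebra"
begin

end

theory Submission
  imports Defs
begin


definition suppset :: "nat set \<Rightarrow> 'a::zero poly set" where
  "suppset A = {c. \<forall>i. coeff c i \<noteq> 0 \<longrightarrow> i \<in> A}"

lemma card_suppset: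
  assumes "finite A"
  shows "card (suppset A :: 'a::{field,finite} poly set) = card (UNIV::'a set) ^ card A"
  using assms
proof (induction rule: finite_induct)
  case empty
  have "suppset {} = {0::'a poly}" by (auto simp: suppset_def poly_eq_iff)
  then show ?case by simp
next
  case (insert a A)
  have eq: "(suppset (insert a A) :: 'a poly set) = (\<lambda>(c,b). c + monom b a) ` ((suppset A :: 'a poly set) \<times> (UNIV::'a set))"
  proof (intro set_eqI iffI)
    fix x :: "'a poly" assume x: "x \<in> suppset (insert a A)"
    have "x - monom (coeff x a) a \<in> suppset A"
      using x by (auto simp: suppset_def coeff_monom split: if_splits)
    then show "x \<in> (\<lambda>(c,b). c + monom b a) ` (suppset A \<times> UNIV)"
      by (intro image_eqI[of _ _ "(x - monom (coeff x a) a, coeff x a)"]) auto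
  next
    fix x :: "'a poly" assume "x \<in> (\<lambda>(c,b). c + monom b a) ` (suppset A \<times> UNIV)"
    then show "x \<in> suppset (insert a A)"
      by (auto simp: suppset_def coeff_monom split: if_splits)
  qed
  have inj: "inj_on (\<lambda>(c,b). c + monom b a) ((suppset A :: 'a poly set) \<times> (UNIV::'a set))"
  proof (rule inj_onI, clarify)
    fix c c' :: "'a poly" and b b' :: 'a assume c: "c \<in> suppset A" and c': "c' \<in> suppset A"
      and e: "c + monom b a = c' + monom b' a"
    have "coeff (c + monom b a) a = coeff (c' + monom b' a) a" using e by simp
    moreover have "coeff c a = 0" "coeff c' a = 0" using c c' insert(2) by (auto simp: suppset_def)
    ultimately have "b = b'" by simp
    with e show "c = c' \<and> b = b'" by simp
  qed
  have "card (suppset (insert a A) :: 'a poly set) = card ((suppset A :: 'a poly set) \<times> (UNIV::'a set))"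
    unfolding eq using inj by (simp add: card_image)
  also have "\<dots> = card (UNIV::'a set) ^ card A * card (UNIV::'a set)" by (simp add: card_cartesian_product insert.IH)
  finally show ?case using insert by simp
qed

lemma finite_suppset:
  assumes "finite A"
  shows "finite (suppset A :: 'a::{field,finite} poly set)"
proof -
  have "card (UNIV :: 'a set) > 0" by (simp add: finite_UNIV_card_ge_0)
  then have "card (suppset A :: 'a poly set) > 0" using card_suppset[OF assms, where 'a='a] by simp
  then show ?thesis using card_gt_0_iff by blast
qed

lemma degree_le_suppset: "{c::'a::zero poly. degree c \<le> r} = suppset {..r}"
  apply (auto simp: suppset_def)
  using le_degree order_trans apply blast
  by (rule degree_le) (auto dest: leD)

lemma degree_less_suppset: "d \<ge> 1 \<Longrightarrow> {c::'a::zero poly. degree c < d} = suppset {..<d}"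
  apply (auto simp: suppset_def)
  apply (meson le_degree le_less_trans)
  by (metis Suc_le_eq bot_nat_0.not_eq_extremum coeff_eq_0 degree_0 leading_coeff_0_iff less_trans_Suc linorder_neqE_nat not_less_eq)

lemma frob_surj:
  assumes "prime p" "CHAR('a::{field,finite}) = p"
  shows "surj (\<lambda>x::'a. x ^ p)"
proof (rule finite_UNIV_inj_surj)
  show "finite (UNIV :: 'a set)" by simp
  show "inj (\<lambda>x::'a. x ^ p)"
  proof (rule injI)
    fix x y :: 'a assume e: "x ^ p = y ^ p"
    have "((x - y) + y) ^ p = (x - y) ^ p + y ^ p"
      by (rule freshmans_dream) (use assms in auto)
    then have "(x - y) ^ p = 0" using e by simp
    then show "x = y" by simp
  qed
qed



lemma pderiv_zero_coeff:
  assumes "CHAR('a::field) = p" "pderiv (f::'a poly) = 0" "\<not> p dvd i"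
  shows "coeff f i = 0"
proof -
  have i: "i > 0" using assms(3) by (auto intro: Nat.gr0I)
  have "coeff (pderiv f) (i - 1) = of_nat i * coeff f i"
    using i by (simp add: coeff_pderiv)
  moreover have "of_nat i \<noteq> (0::'a)" using assms(1,3) by (simp add: of_nat_eq_0_iff_char_dvd)
  ultimately show ?thesis using assms(2) by simp
qed

lemma pderiv_zero_pth_power:
  assumes "prime p" "CHAR('a::{field,finite}) = p" "pderiv (f::'a poly) = 0"
  shows "\<exists>g. f = g ^ p"
proof -
  define rt where "rt = inv (\<lambda>x::'a. x ^ p)"
  have rt: "rt b ^ p = b" for b
    unfolding rt_def using surj_f_inv_f[OF frob_surj[OF assms(1,2)], of b] by simp
  define N where "N = degree f"
  define g where "g = (\<Sum>j\<le>N. monom (rt (coeff f (p*j))) j)"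
  have cp: "prime CHAR('a poly)" using assms by simp
  have "g ^ p = (\<Sum>j\<le>N. monom (rt (coeff f (p*j))) j ^ p)"
    unfolding g_def by (rule freshmans_dream_sum) (use assms in simp_all)
  also have "\<dots> = (\<Sum>j\<le>N. monom (coeff f (p*j)) (j*p))"
    by (simp add: monom_power rt)
  also have "\<dots> = f"
  proof (rule poly_eqI)
    fix n
    have "coeff (\<Sum>j\<le>N. monom (coeff f (p*j)) (j*p)) n = (\<Sum>j\<le>N. if j*p = n then coeff f (p*j) else 0)"
      by (simp add: coeff_sum coeff_monom)
    also have "\<dots> = coeff f n"
    proof (cases "p dvd n")
      case True
      then obtain j0 where j0: "n = p * j0" by auto
      have p0: "p > 0" using assms(1) prime_gt_0_nat by blast
      have eqj: "j * p = n \<longleftrightarrow> j = j0" for j using j0 p0 by auto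
      show ?thesis
      proof (cases "j0 \<le> N")
        case True
        then show ?thesis using p0 by (simp add: eqj j0)
      next
        case False
        have "j0 \<le> p * j0" using p0 by simp
        then have "n > N" using j0 False by linarith
        then have "coeff f n = 0" unfolding N_def by (simp add: coeff_eq_0)
        then show ?thesis using False by (simp add: eqj)
      qed
    next
      case False
      then have "j * p \<noteq> n" for j by auto
      then show ?thesis using pderiv_zero_coeff[OF assms(2,3) False] by simp
    qed
    finally show "coeff (\<Sum>j\<le>N. monom (coeff f (p*j)) (j*p)) n = coeff f n" .
  qed
  finally have "g ^ p = f" .
  then show ?thesis by blast
qed



lemma bez_poly:
  fixes a b :: "'a::field poly"
  assumes "a \<noteq> 0"
  shows "\<exists>u v. u*a + v*b \<noteq> 0 \<and> (u*a + v*b) dvd a \<and> (u*a + v*b) dvd b"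
proof -
  define P where "P = (\<lambda>g::'a poly. g \<noteq> 0 \<and> (\<exists>u v. g = u*a + v*b))"
  have "a = 1*a + 0*b" by simp
  then have "P a" unfolding P_def using assms by blast
  then obtain g where g: "P g" and gmin: "\<And>h. P h \<Longrightarrow> degree g \<le> degree h"
    using ex_has_least_nat[of P a degree] by blast
  from g obtain u v where guv: "g = u*a + v*b" and gnz: "g \<noteq> 0" unfolding P_def by blast
  have dv: "g dvd x" if ex: "\<exists>u' v'. x = u'*a + v'*b" for x
  proof (rule ccontr)
    assume nd: "\<not> g dvd x"
    then have m: "x mod g \<noteq> 0" by (simp add: dvd_eq_mod_eq_0)
    obtain u' v' where x: "x = u'*a + v'*b" using ex by blast
    have "x mod g = x - (x div g) * g" by (simp add: minus_div_mult_eq_mod)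
    also have "\<dots> = (u' - (x div g)*u)*a + (v' - (x div g)*v)*b"
      unfolding x guv by (simp add: algebra_simps)
    finally have "P (x mod g)" using m unfolding P_def by blast
    then have "degree g \<le> degree (x mod g)" by (rule gmin)
    moreover have "degree (x mod g) < degree g" using degree_mod_less'[OF gnz m] .
    ultimately show False by simp
  qed
  have "a = 1*a + 0*b" by simp
  then have "g dvd a" using dv by blast
  moreover have "b = 0*a + 1*b" by simp
  then have "g dvd b" using dv by blast
  ultimately show ?thesis using guv gnz by blast
qed

lemma const_poly_inv:
  fixes g :: "'a::field poly"
  assumes "degree g = 0" "g \<noteq> 0"
  shows "smult (inverse (coeff g 0)) g = 1"
proof -
  have "g = [:coeff g 0:]" using assms(1) by (metis degree_eq_zeroE coeff_pCons_0)
  moreover have "coeff g 0 \<noteq> 0" using assms by (metis calculation pCons_eq_0_iff zero_poly.rep_eq(1))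
  ultimately show ?thesis by (metis coeff_pCons_0 field_class.field_inverse one_pCons smult_pCons smult_0_right)
qed



lemma sqf_bezout_pderiv:
  assumes "prime p" "CHAR('a::{field,finite}) = p" "squarefree (Q::'a poly)" "Q \<noteq> 0"
  shows "\<exists>u v. u*Q + v*pderiv Q = 1"
proof -
  obtain u v where g: "u*Q + v*pderiv Q \<noteq> 0" "(u*Q + v*pderiv Q) dvd Q" "(u*Q + v*pderiv Q) dvd pderiv Q"
    using bez_poly[OF assms(4)] by blast
  define f where "f = u*Q + v*pderiv Q"
  show ?thesis
  proof (cases "degree f = 0")
    case True
    define c where "c = inverse (coeff f 0)"
    have "smult c f = 1" unfolding c_def using True g(1) f_def const_poly_inv by blast
    then have "(smult c u)*Q + (smult c v)*pderiv Q = 1" unfolding f_def by (simp add: algebra_simps smult_add_right)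
    then show ?thesis by blast
  next
    case False
    have fnz: "f \<noteq> 0" using g(1) f_def by simp
    have fQ: "f dvd Q" and fQ': "f dvd pderiv Q" using g f_def by auto
    then obtain h where h: "Q = f * h" by (auto elim: dvdE)
    have "pderiv Q = f * pderiv h + h * pderiv f" using h by (simp add: pderiv_mult)
    then have fhf: "f dvd h * pderiv f" using fQ' by (metis dvd_add_right_iff dvd_triv_left)
    obtain u3 v3 where g3: "u3*f + v3*h \<noteq> 0" "(u3*f + v3*h) dvd f" "(u3*f + v3*h) dvd h"
      using bez_poly[OF fnz] by blast
    define e where "e = u3*f + v3*h"
    have enz: "e \<noteq> 0" and ef: "e dvd f" and eh: "e dvd h" using g3 unfolding e_def by auto
    have "degree e = 0"
    proof (rule ccontr)
      assume ne: "degree e \<noteq> 0"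
      have "e\<^sup>2 dvd Q" unfolding h power2_eq_square using ef eh by (rule mult_dvd_mono)
      then have "is_unit e" using assms(3) unfolding squarefree_def by auto
      then show False using ne is_unit_iff_degree[OF enz] by simp
    qed
    have "e * pderiv f = f * (u3 * pderiv f) + v3 * (h * pderiv f)" by (simp add: e_def algebra_simps)
    moreover have "f dvd f * (u3 * pderiv f) + v3 * (h * pderiv f)"
      by (rule dvd_add[OF dvd_triv_left dvd_mult[OF fhf]])
    ultimately have "f dvd e * pderiv f" by simp
    then have "f dvd smult (inverse (coeff e 0)) (e * pderiv f)" by (simp add: dvd_smult)
    also have "smult (inverse (coeff e 0)) (e * pderiv f) = pderiv f"
      using const_poly_inv[OF \<open>degree e = 0\<close> enz] by (metis mult_smult_left mult_1)
    finally have fd: "f dvd pderiv f" .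
    have degf: "degree f > 0" using False by simp
    have "pderiv f = 0"
    proof (rule ccontr)
      assume nz: "pderiv f \<noteq> 0"
      have "degree f \<le> degree (pderiv f)" using fd nz by (rule dvd_imp_degree_le)
      moreover have "degree (pderiv f) < degree f"
      proof -
        have "coeff (pderiv f) n = 0" if nn: "n > degree f - 1" for n
        proof -
          have "degree f < Suc n" using nn degf by arith
          then show ?thesis by (simp add: coeff_pderiv coeff_eq_0)
        qed
        then have "degree (pderiv f) \<le> degree f - 1" by (intro degree_le) auto
        then show ?thesis using degf by linarith
      qed
      ultimately show False by linarith
    qed
    then obtain g0 where g0: "f = g0 ^ p" using pderiv_zero_pth_power[OF assms(1,2)] by blast
    have p2: "p \<ge> 2" using assms(1) prime_ge_2_nat by blast
    have "g0\<^sup>2 dvd f" unfolding g0 using p2 by (simp add: le_imp_power_dvd)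
    then have "g0\<^sup>2 dvd Q" using fQ dvd_trans by blast
    then have "is_unit g0" using assms(3) unfolding squarefree_def by auto
    then have "is_unit f" unfolding g0 by (simp add: is_unit_power_iff)
    then have False using is_unit_iff_degree[OF fnz] degf by simp
    then show ?thesis ..
  qed
qed



definition Yset :: "'a::field poly \<Rightarrow> nat \<Rightarrow> nat \<Rightarrow> 'a poly set" where
  "Yset Q p k = (\<lambda>c. pderiv c mod Q) ` {c. degree c < p * Suc k}"

lemma Y_add:
  assumes "z1 \<in> Yset Q p k" "z2 \<in> Yset Q p k"
  shows "z1 + z2 \<in> Yset Q p k"
proof -
  obtain c1 where c1: "degree c1 < p * Suc k" "z1 = pderiv c1 mod Q" using assms(1) by (auto simp: Yset_def)
  obtain c2 where c2: "degree c2 < p * Suc k" "z2 = pderiv c2 mod Q" using assms(2) by (auto simp: Yset_def)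
  have "degree (c1 + c2) < p * Suc k"
    using degree_add_le_max[of c1 c2] c1 c2 by linarith
  moreover have "z1 + z2 = pderiv (c1 + c2) mod Q" using c1 c2 by (simp add: pderiv_add poly_mod_add_left)
  ultimately show ?thesis unfolding Yset_def by blast
qed

lemma Y_smult:
  assumes "z \<in> Yset Q p k"
  shows "smult a z \<in> Yset Q p k"
proof -
  obtain c where c: "degree c < p * Suc k" "z = pderiv c mod Q" using assms by (auto simp: Yset_def)
  have "degree (smult a c) < p * Suc k" using degree_smult_le[of a c] c by linarith
  moreover have "smult a z = pderiv (smult a c) mod Q" using c by (simp add: pderiv_smult mod_smult_left)
  ultimately show ?thesis unfolding Yset_def by blast
qed

lemma Y_diff:
  assumes "z1 \<in> Yset Q p k" "z2 \<in> Yset Q p k"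
  shows "z1 - z2 \<in> Yset Q p k"
proof -
  have "z1 + smult (-1) z2 \<in> Yset Q p k" using assms by (intro Y_add Y_smult)
  then show ?thesis by simp
qed

lemma Y_mono: "Yset Q p k \<subseteq> Yset Q p (Suc k)"
  unfolding Yset_def by (rule image_mono) auto

lemma Y_mono': "k \<le> K \<Longrightarrow> Yset Q p k \<subseteq> Yset Q p K"
  unfolding Yset_def by (rule image_mono) (auto intro: less_le_trans)

lemma pderiv_monom_p:
  assumes h: "CHAR('a::field) = p" shows "pderiv (monom (1::'a) p) = 0"
  by (simp add: pderiv_monom flip: h)

lemma Y_shift:
  assumes "CHAR('a::field) = p" "z \<in> Yset (Q::'a poly) p k"
  shows "(monom 1 p * z) mod Q \<in> Yset Q p (Suc k)"
proof -
  obtain c where c: "degree c < p * Suc k" "z = pderiv c mod Q" using assms(2) by (auto simp: Yset_def)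
  have "degree (monom (1::'a) p * c) \<le> p + degree c"
    using degree_mult_le[of "monom (1::'a) p" c] by (simp add: degree_monom_eq)
  then have "degree (monom (1::'a) p * c) < p * Suc (Suc k)" using c(1) by simp
  moreover have "(monom 1 p * z) mod Q = pderiv (monom 1 p * c) mod Q"
    using c(2) pderiv_monom_p[OF assms(1)] by (simp add: pderiv_mult mod_mult_right_eq)
  ultimately show ?thesis unfolding Yset_def by blast
qed

lemma Y_sub:
  assumes "degree Q \<ge> 1"
  shows "Yset Q p k \<subseteq> {t. degree t < degree Q}"
proof
  fix z assume "z \<in> Yset Q p k"
  then obtain c where "z = pderiv c mod Q" by (auto simp: Yset_def)
  moreover have "Q \<noteq> 0" using assms by auto
  ultimately show "z \<in> {t. degree t < degree Q}"
    using degree_mod_less[of Q "pderiv c"] assms by auto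
qed

lemma Y_all:
  assumes "CHAR('a::field) = p" "p > 0" "Yset (Q::'a poly) p (Suc k) \<subseteq> Yset Q p k"
  shows "pderiv c mod Q \<in> Yset Q p k"
proof (induction "degree c" arbitrary: c rule: less_induct)
  case less
  show ?case
  proof (cases "degree c < p * Suc k")
    case True
    then show ?thesis unfolding Yset_def by blast
  next
    case False
    define m where "m = monom (1::'a) p"
    have dm: "degree m = p" unfolding m_def by (simp add: degree_monom_eq)
    have dc: "degree c > 0" using False assms(2) by (metis bot_nat_0.not_eq_extremum mult_is_0 nat.distinct(1))
    have split: "c = m * (c div m) + c mod m" by simp
    have d1: "degree (c div m) < degree c" using degree_div_less[OF dc] dm assms(2) by simp
    have m0: "m \<noteq> 0" unfolding m_def by simp
    have "degree (c mod m) < p * Suc k"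
    proof (cases "c mod m = 0")
      case True then show ?thesis using assms(2) by simp
    next
      case False
      then have "degree (c mod m) < p" using degree_mod_less'[OF m0 False] dm by simp
      moreover have "p \<le> p * Suc k" by simp
      ultimately show ?thesis by linarith
    qed
    then have A: "pderiv (c mod m) mod Q \<in> Yset Q p k" unfolding Yset_def by blast
    have "pderiv (c div m) mod Q \<in> Yset Q p k" using less d1 by blast
    then have "(m * (pderiv (c div m) mod Q)) mod Q \<in> Yset Q p (Suc k)"
      unfolding m_def by (rule Y_shift[OF assms(1)])
    then have B: "(m * pderiv (c div m)) mod Q \<in> Yset Q p k" using assms(3) by (auto simp: mod_mult_right_eq)
    have e1: "pderiv (m * (c div m) + c mod m) = m * pderiv (c div m) + pderiv (c mod m)"
      unfolding pderiv_add pderiv_mult m_def pderiv_monom_p[OF assms(1)] by simp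
    have "pderiv c = pderiv (m * (c div m) + c mod m)" by simp
    then have "pderiv c = m * pderiv (c div m) + pderiv (c mod m)" using e1 by simp
    then have "pderiv c mod Q = (m * pderiv (c div m)) mod Q + pderiv (c mod m) mod Q"
      by (simp add: poly_mod_add_left)
    then show ?thesis using Y_add[OF B A] by simp
  qed
qed

lemma Y_stable:
  assumes "CHAR('a::field) = p" "p > 0" "Yset (Q::'a poly) p (Suc k) \<subseteq> Yset Q p k"
    and bez: "u*Q + v*pderiv Q = 1"
  shows "{t. degree t < degree Q} \<subseteq> Yset Q p k"
proof
  fix t :: "'a poly" assume "t \<in> {t. degree t < degree Q}"
  then have tt: "t mod Q = t" by (simp add: mod_poly_less)
  have "pderiv (Q * (v * t)) - t = Q * (pderiv (v*t) - u * t)"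
  proof -
    have "pderiv (Q * (v * t)) = Q * pderiv (v*t) + (v * t) * pderiv Q" by (simp add: pderiv_mult)
    also have "(v * t) * pderiv Q = t * (v * pderiv Q)" by (simp add: algebra_simps)
    also have "v * pderiv Q = 1 - u * Q" using bez by (simp add: algebra_simps)
    finally show ?thesis by (simp add: algebra_simps)
  qed
  then have "pderiv (Q * (v * t)) mod Q = t mod Q" by (simp add: mod_eq_dvd_iff)
  then have e: "pderiv (Q * (v * t)) mod Q = t" using tt by simp
  have "pderiv (Q * (v * t)) mod Q \<in> Yset Q p k" by (rule Y_all[OF assms(1-3)])
  then show "t \<in> Yset Q p k" unfolding e .
qed



lemma degree_pderiv_le': "degree (pderiv (c::'a::field poly)) \<le> degree c - 1"
proof (rule degree_le, intro allI impI)
  fix n assume "n > degree c - 1"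
  then show "coeff (pderiv c) n = 0"
  proof (cases "degree c = 0")
    case True
    then show ?thesis by (simp add: coeff_pderiv coeff_eq_0)
  next
    case False
    then have "degree c < Suc n" using \<open>n > degree c - 1\<close> by arith
    then show ?thesis by (simp add: coeff_pderiv coeff_eq_0)
  qed
qed

lemma R_card:
  assumes "d \<ge> 1"
  shows "card {t::'a::{field,finite} poly. degree t < d} = card (UNIV::'a set) ^ d"
    and "finite {t::'a::{field,finite} poly. degree t < d}"
  using card_suppset[of "{..<d}", where 'a='a] finite_suppset[of "{..<d}", where 'a='a]
    degree_less_suppset[OF assms, where 'a='a] by simp_all

lemma Y_finite:
  assumes "degree (Q::'a::{field,finite} poly) \<ge> 1"
  shows "finite (Yset Q p k)"
  using Y_sub[OF assms] R_card(2)[OF assms] finite_subset by blast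

lemma Y_growth:
  assumes "degree (Q::'a::{field,finite} poly) \<ge> 1" "Yset Q p (Suc k) \<noteq> Yset Q p k"
  shows "card (UNIV::'a set) * card (Yset Q p k) \<le> card (Yset Q p (Suc k))"
proof -
  obtain w where w: "w \<in> Yset Q p (Suc k)" "w \<notin> Yset Q p k"
    using assms(2) Y_mono[of Q p k] by blast
  define f where "f = (\<lambda>(a::'a, z). smult a w + z)"
  have inj: "inj_on f (UNIV \<times> Yset Q p k)"
  proof (rule inj_onI, clarify)
    fix a b :: 'a and z z' assume z: "z \<in> Yset Q p k" and z': "z' \<in> Yset Q p k"
      and e: "f (a, z) = f (b, z')"
    have e2: "smult (a - b) w = z' - z" using e unfolding f_def by (simp add: algebra_simps smult_diff_left)
    have "a = b"
    proof (rule ccontr)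
      assume ab: "a \<noteq> b"
      have "smult (inverse (a - b)) (z' - z) \<in> Yset Q p k" using Y_diff[OF z' z] by (rule Y_smult)
      moreover have "smult (inverse (a - b)) (z' - z) = w" using ab unfolding e2[symmetric] by simp
      ultimately show False using w(2) by simp
    qed
    then show "a = b \<and> z = z'" using e unfolding f_def by simp
  qed
  have sub: "f ` (UNIV \<times> Yset Q p k) \<subseteq> Yset Q p (Suc k)"
  proof clarify
    fix a :: 'a and z assume "z \<in> Yset Q p k"
    then have "z \<in> Yset Q p (Suc k)" using Y_mono by blast
    then show "f (a, z) \<in> Yset Q p (Suc k)" unfolding f_def using w(1) by (simp add: Y_add Y_smult)
  qed
  have "card ((UNIV::'a set) \<times> Yset Q p k) \<le> card (Yset Q p (Suc k))"
    by (rule card_inj_on_le[OF inj sub Y_finite[OF assms(1)]])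
  then show ?thesis by (simp add: card_cartesian_product)
qed

lemma Y_lower:
  assumes "degree (Q::'a::{field,finite} poly) \<ge> 1" "CHAR('a) = p" "p > 0"
    and bez: "u*Q + v*pderiv Q = 1" and "k \<le> K"
  shows "min (card (UNIV::'a set) ^ degree Q) (card (Yset Q p k) * card (UNIV::'a set) ^ (K - k))
           \<le> card (Yset Q p K)"
  using assms(5)
proof (induction K rule: dec_induct)
  case base
  then show ?case by simp
next
  case (step K)
  define q where "q = card (UNIV::'a set)"
  define X where "X = card (Yset Q p k) * q ^ (K - k)"
  have IH: "min (q ^ degree Q) X \<le> card (Yset Q p K)" using step.IH unfolding q_def X_def .
  have XS: "card (Yset Q p k) * q ^ (Suc K - k) = q * X"
    unfolding X_def using step.hyps(1) by (simp add: Suc_diff_le)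
  show ?case
  proof (cases "Yset Q p (Suc K) = Yset Q p K")
    case True
    have "{t. degree t < degree Q} \<subseteq> Yset Q p K"
      using Y_stable[OF assms(2,3) _ bez] True by blast
    then have "Yset Q p K = {t. degree t < degree Q}" using Y_sub[OF assms(1)] by blast
    then have "card (Yset Q p (Suc K)) = q ^ degree Q" using True R_card(1)[OF assms(1)] q_def by simp
    then show ?thesis by (simp add: q_def)
  next
    case False
    have "q * card (Yset Q p K) \<le> card (Yset Q p (Suc K))" using Y_growth[OF assms(1) False] q_def by simp
    moreover have "min (q ^ degree Q) (q * X) \<le> q * card (Yset Q p K)"
    proof -
      have q1: "q \<ge> 1" unfolding q_def by (simp add: Suc_leI finite_UNIV_card_ge_0)
      have "min (q ^ degree Q) (q * X) \<le> q * min (q ^ degree Q) X"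
        using q1 by (cases "q ^ degree Q \<le> X") (auto simp: min_def intro: order_trans[OF _ mult_le_mono1[of 1 q]])
      also have "\<dots> \<le> q * card (Yset Q p K)" using IH by simp
      finally show ?thesis .
    qed
    ultimately show ?thesis using XS q_def by simp
  qed
qed



lemma cardA:
  assumes "p > (0::nat)"
  shows "card {i. i < p * Suc k \<and> \<not> p dvd i} = (p - 1) * Suc k"
proof -
  define h where "h = (\<lambda>(j, s). p * j + s)"
  have eq: "{i. i < p * Suc k \<and> \<not> p dvd i} = h ` ({..<Suc k} \<times> {1..<p})"
  proof (intro set_eqI iffI)
    fix i assume "i \<in> {i. i < p * Suc k \<and> \<not> p dvd i}"
    then have i: "i < p * Suc k" "\<not> p dvd i" by auto
    have "i mod p \<noteq> 0" using i(2) by (simp add: dvd_eq_mod_eq_0)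
    moreover have "i mod p < p" using assms by simp
    moreover have "i div p < Suc k" using i(1) assms by (simp add: div_less_iff_less_mult mult.commute)
    moreover have "i = h (i div p, i mod p)" unfolding h_def by simp
    ultimately show "i \<in> h ` ({..<Suc k} \<times> {1..<p})" by force
  next
    fix i assume "i \<in> h ` ({..<Suc k} \<times> {1..<p})"
    then obtain j s where js: "j < Suc k" "1 \<le> s" "s < p" "i = p * j + s" unfolding h_def by auto
    have "p * j + s < p * Suc j" using js by simp
    also have "\<dots> \<le> p * Suc k" using js by simp
    finally have "i < p * Suc k" using js by simp
    moreover have "\<not> p dvd i"
    proof
      assume "p dvd i"
      then have "p dvd s" using js by (simp add: dvd_add_right_iff)
      then show False using js by (auto dest: dvd_imp_le)
    qed
    ultimately show "i \<in> {i. i < p * Suc k \<and> \<not> p dvd i}" by simp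
  qed
  have inj: "inj_on h ({..<Suc k} \<times> {1..<p})"
  proof (rule inj_onI)
    fix x y assume x: "x \<in> {..<Suc k} \<times> {1..<p}" and y: "y \<in> {..<Suc k} \<times> {1..<p}"
      and e: "h x = h y"
    obtain j s where xj: "x = (j, s)" by (cases x)
    obtain j' s' where yj: "y = (j', s')" by (cases y)
    have s: "s < p" "s' < p" using x y xj yj by auto
    have e': "p * j + s = p * j' + s'" using e xj yj unfolding h_def by simp
    have "(p * j + s) div p = (p * j' + s') div p" using e' by simp
    then have "j = j'" using s assms by simp
    moreover have "(p * j + s) mod p = (p * j' + s') mod p" using e' by simp
    then have "s = s'" using s by simp
    ultimately show "x = y" using xj yj by simp
  qed
  have "card (h ` ({..<Suc k} \<times> {1..<p})) = (p - 1) * Suc k"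
    using card_image[OF inj] by (simp add: card_cartesian_product)
  then show ?thesis using eq by simp
qed

lemma Y_init:
  assumes "CHAR('a::{field,finite}) = p" "prime p" "p * Suc k \<le> degree (Q::'a poly)"
  shows "card (UNIV::'a set) ^ ((p - 1) * Suc k) \<le> card (Yset Q p k)"
proof -
  have p0: "p > 0" using assms(2) prime_gt_0_nat by blast
  define A where "A = {i. i < p * Suc k \<and> \<not> p dvd i}"
  have fA: "finite A" unfolding A_def by simp
  define B where "B = (suppset A :: 'a poly set)"
  have dB: "degree c < p * Suc k" if "c \<in> B" for c
  proof (cases "c = 0")
    case True then show ?thesis using p0 by simp
  next
    case False
    then have "coeff c (degree c) \<noteq> 0" by simp
    then show ?thesis using that unfolding B_def suppset_def A_def by blast
  qed
  have "pderiv ` B \<subseteq> Yset Q p k"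
  proof
    fix x assume "x \<in> pderiv ` B"
    then obtain c where c: "c \<in> B" "x = pderiv c" by blast
    have "degree (pderiv c) < degree Q"
      using degree_pderiv_le'[of c] dB[OF c(1)] assms(3) p0 by (metis diff_less le_trans less_one not_le le_less_trans diff_le_self Suc_le_eq)
    then have "x = pderiv c mod Q" using c(2) by (simp add: mod_poly_less)
    then show "x \<in> Yset Q p k" unfolding Yset_def using dB[OF c(1)] by blast
  qed
  moreover have "inj_on pderiv B"
  proof (rule inj_onI)
    fix c1 c2 assume c1: "c1 \<in> B" and c2: "c2 \<in> B" and e: "pderiv c1 = pderiv c2"
    show "c1 = c2"
    proof (rule poly_eqI)
      fix i
      show "coeff c1 i = coeff c2 i"
      proof (cases "i \<in> A")
        case True
        then have i0: "i > 0" and nd: "\<not> p dvd i" unfolding A_def by (auto intro: Nat.gr0I)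
        have "of_nat i \<noteq> (0::'a)" using nd assms(1) by (simp add: of_nat_eq_0_iff_char_dvd)
        moreover have "coeff (pderiv c1) (i - 1) = coeff (pderiv c2) (i - 1)" using e by simp
        ultimately show ?thesis using i0 by (simp add: coeff_pderiv)
      next
        case False
        then have "coeff c1 i = 0" "coeff c2 i = 0" using c1 c2 unfolding B_def suppset_def by auto
        then show ?thesis by simp
      qed
    qed
  qed
  moreover have "finite (Yset Q p k)"
  proof -
    have "degree Q \<ge> 1" using assms(3) p0 by (metis One_nat_def Suc_leI le_trans mult_pos_pos zero_less_Suc)
    then show ?thesis by (rule Y_finite)
  qed
  ultimately have "card B \<le> card (Yset Q p k)" by (intro card_inj_on_le)
  moreover have "card B = card (UNIV::'a set) ^ ((p - 1) * Suc k)"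
    using card_suppset[OF fA, where 'a='a] cardA[OF p0, of k] unfolding B_def A_def by simp
  ultimately show ?thesis by simp
qed

lemma card_T:
  fixes Q :: "'a::{field,finite} poly"
  shows "card {c. degree c \<le> r \<and> Q dvd pderiv c} * card ((\<lambda>c. pderiv c mod Q) ` {c. degree c \<le> r})
          \<le> card (UNIV::'a set) ^ Suc r"
proof -
  define P where "P = {c::'a poly. degree c \<le> r}"
  define T where "T = {c::'a poly. degree c \<le> r \<and> Q dvd pderiv c}"
  define \<phi> where "\<phi> = (\<lambda>c::'a poly. pderiv c mod Q)"
  have fP: "finite P" and cP: "card P = card (UNIV::'a set) ^ Suc r"
    unfolding P_def degree_le_suppset using finite_suppset[of "{..r}"] card_suppset[of "{..r}"] by auto
  define s where "s = inv_into P \<phi>"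
  have s: "s w \<in> P" "\<phi> (s w) = w" if "w \<in> \<phi> ` P" for w
    using that unfolding s_def by (auto intro: inv_into_into f_inv_into_f)
  have phi_add: "\<phi> (a + b) = \<phi> a + \<phi> b" for a b unfolding \<phi>_def by (simp add: pderiv_add poly_mod_add_left)
  have phiT: "\<phi> t = 0" if "t \<in> T" for t using that unfolding T_def \<phi>_def by (simp add: dvd_eq_mod_eq_0)
  define g where "g = (\<lambda>(t, w). t + s w)"
  have inj: "inj_on g (T \<times> \<phi> ` P)"
  proof (rule inj_onI)
    fix x y assume x: "x \<in> T \<times> \<phi> ` P" and y: "y \<in> T \<times> \<phi> ` P" and e: "g x = g y"
    obtain t w where xj: "x = (t, w)" by (cases x)
    obtain t' w' where yj: "y = (t', w')" by (cases y)
    have t: "t \<in> T" and w: "w \<in> \<phi> ` P" using x xj by auto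
    have t': "t' \<in> T" and w': "w' \<in> \<phi> ` P" using y yj by auto
    have e': "t + s w = t' + s w'" using e xj yj unfolding g_def by simp
    have "\<phi> (t + s w) = \<phi> (t' + s w')" using e' by simp
    then have "w = w'" using phiT[OF t] phiT[OF t'] s[OF w] s[OF w'] by (simp add: phi_add)
    then show "x = y" using e' xj yj by simp
  qed
  have sub: "g ` (T \<times> \<phi> ` P) \<subseteq> P"
  proof
    fix x assume "x \<in> g ` (T \<times> \<phi> ` P)"
    then obtain t w where t: "t \<in> T" and w: "w \<in> \<phi> ` P" and xg: "x = g (t, w)" by blast
    have "degree t \<le> r" using t unfolding T_def by simp
    moreover have "degree (s w) \<le> r" using s(1)[OF w] unfolding P_def by simp
    ultimately have "degree (t + s w) \<le> r" by (intro degree_add_le)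
    then show "x \<in> P" unfolding xg g_def P_def by simp
  qed
  have "card (T \<times> \<phi> ` P) \<le> card P" by (rule card_inj_on_le[OF inj sub fP])
  then have "card T * card (\<phi> ` P) \<le> card (UNIV::'a set) ^ Suc r" using cP by (simp add: card_cartesian_product)
  then show ?thesis unfolding T_def \<phi>_def P_def .
qed



lemma rhs1_eq:
  assumes "real p > 0"
  shows "real r/2 + (1/2 - 1/real p)*(real r - 2*real d) + 2*real p
       = (real r - real d) + (2*real d - real r)/real p + 2*real p"
  using assms by (simp add: field_simps)

lemma key_ineq:
  fixes P T S D R :: real
  assumes "P \<ge> 3" "P*T \<ge> D - P + 1" "P*S \<ge> R + 2 - P"
  shows "P * (R + 1 - ((P - 2)*T + S)) \<le> P*R - P*D + 2*D - R + 2*P*P - P*P - P"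
proof -
  have "(P - 2)*(P*T) \<ge> (P - 2)*(D - P + 1)" using assms by (intro mult_left_mono) auto
  then have "P * ((P - 2)*T + S) \<ge> (P - 2)*(D - P + 1) + (R + 2 - P)"
    using assms(3) by (simp add: algebra_simps)
  then show ?thesis by (simp add: algebra_simps)
qed

lemma num_case1:
  fixes p d r t s :: nat
  assumes p3: "p \<ge> 3" and dr: "d < r" "r < 2*d" and ht: "d < p*(t+1)" and hs: "r + 1 < p*(s+1)" and ts: "t \<le> s"
  shows "real (r + 1 - min d ((p-1)*t + (s-t))) \<le> real r/2 + (1/2 - 1/real p)*(real r - 2*real d) + 2*real p"
proof -
  have pp: "real p > 0" using p3 by simp
  have E: "real r/2 + (1/2 - 1/real p)*(real r - 2*real d) + 2*real p
       = (real r - real d) + (2*real d - real r)/real p + 2*real p" by (rule rhs1_eq[OF pp])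
  have pos: "(2*real d - real r)/real p \<ge> 0" using dr pp by simp
  show ?thesis
  proof (cases "d \<le> (p-1)*t + (s-t)")
    case True
    then have "min d ((p-1)*t + (s-t)) = d" by simp
    moreover have "real (r + 1 - d) = real r + 1 - real d" using dr by (simp add: of_nat_diff)
    moreover have "real p \<ge> 3" using p3 by simp
    ultimately show ?thesis unfolding E using pos by simp
  next
    case False
    define \<rho> where "\<rho> = (p-1)*t + (s-t)"
    have m: "min d ((p-1)*t + (s-t)) = \<rho>" using False \<rho>_def by simp
    have a1: "real ((p-1)*t) = (real p - 1) * real t" using p3 by (simp add: of_nat_diff)
    have a2: "real (s - t) = real s - real t" using ts by (simp add: of_nat_diff)
    have rr: "real \<rho> = (real p - 2) * real t + real s"
      unfolding \<rho>_def of_nat_add a1 a2 by (simp add: algebra_simps)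
    have rle: "\<rho> \<le> r + 1" using False dr \<rho>_def by simp
    have h1: "real p * real t \<ge> real d - real p + 1"
    proof -
      have "d + 1 \<le> p * t + p" using ht by simp
      then have "real d + 1 \<le> real p * real t + real p" by (metis of_nat_add of_nat_le_iff of_nat_mult of_nat_1)
      then show ?thesis by simp
    qed
    have h2: "real p * real s \<ge> real r + 2 - real p"
    proof -
      have "r + 2 \<le> p * s + p" using hs by simp
      then have "real r + 2 \<le> real p * real s + real p" by (metis of_nat_add of_nat_le_iff of_nat_mult of_nat_numeral)
      then show ?thesis by simp
    qed
    have K: "real p * (real r + 1 - ((real p - 2)*real t + real s)) \<le>
        real p*real r - real p*real d + 2*real d - real r + 2*real p*real p - real p*real p - real p"
      by (rule key_ineq) (use p3 h1 h2 in auto)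
    have "real (r + 1 - \<rho>) = real r + 1 - ((real p - 2)*real t + real s)"
      using rle rr by (simp add: of_nat_diff)
    also have "\<dots> \<le> (real r - real d) + (2*real d - real r)/real p + 2*real p"
    proof -
      have X: "real p * ((real r - real d) + (2*real d - real r)/real p + 2*real p) = real p*real r - real p*real d + 2*real d - real r + 2*real p*real p"
        using pp by (simp add: field_simps)
      have "real p * real p \<ge> 0" by simp
      then have "real p * (real r + 1 - ((real p - 2)*real t + real s)) \<le> real p * ((real r - real d) + (2*real d - real r)/real p + 2*real p)"
        using K pp unfolding X by linarith
      then show ?thesis using pp by simp
    qed
    finally show ?thesis unfolding E m .
  qed
qed

lemma num_case2:
  fixes p d r t s :: nat
  assumes p3: "p \<ge> 3" and dr: "2*d \<le> r" and ht: "d < p*(t+1)" and hs: "r + 1 < p*(s+1)" and ts: "t \<le> s"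
  shows "real (r + 1 - min d ((p-1)*t + (s-t))) \<le> real r/2 + 1/2*(real r - 2*real d) + 2*real p"
proof -
  have pp: "real p > 0" using p3 by simp
  have E: "real r/2 + 1/2*(real r - 2*real d) + 2*real p = real r - real d + 2*real p" by (simp add: field_simps)
  show ?thesis
  proof (cases "d \<le> (p-1)*t + (s-t)")
    case True
    then have "min d ((p-1)*t + (s-t)) = d" by simp
    then show ?thesis unfolding E using dr p3 by (simp add: of_nat_diff)
  next
    case False
    define \<rho> where "\<rho> = (p-1)*t + (s-t)"
    have m: "min d ((p-1)*t + (s-t)) = \<rho>" using False \<rho>_def by simp
    have a1: "real ((p-1)*t) = (real p - 1) * real t" using p3 by (simp add: of_nat_diff)
    have a2: "real (s - t) = real s - real t" using ts by (simp add: of_nat_diff)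
    have rr: "real \<rho> = (real p - 2) * real t + real s"
      unfolding \<rho>_def of_nat_add a1 a2 by (simp add: algebra_simps)
    have rle: "\<rho> \<le> r + 1" using False dr \<rho>_def by simp
    have h1: "real p * real t \<ge> real d - real p + 1"
    proof -
      have "d + 1 \<le> p * t + p" using ht by simp
      then have "real d + 1 \<le> real p * real t + real p" by (metis of_nat_add of_nat_le_iff of_nat_mult of_nat_1)
      then show ?thesis by simp
    qed
    have h2: "real p * real s \<ge> real r + 2 - real p"
    proof -
      have "r + 2 \<le> p * s + p" using hs by simp
      then have "real r + 2 \<le> real p * real s + real p" by (metis of_nat_add of_nat_le_iff of_nat_mult of_nat_numeral)
      then show ?thesis by simp
    qed
    have K: "real p * (real r + 1 - ((real p - 2)*real t + real s)) \<le>
        real p*real r - real p*real d + 2*real d - real r + 2*real p*real p - real p*real p - real p"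
      by (rule key_ineq) (use p3 h1 h2 in auto)
    have dr': "2 * real d \<le> real r" using dr by simp
    have "real (r + 1 - \<rho>) = real r + 1 - ((real p - 2)*real t + real s)"
      using rle rr by (simp add: of_nat_diff)
    also have "\<dots> \<le> real r - real d + 2*real p"
    proof -
      have "real p*real r - real p*real d + 2*real d - real r + 2*real p*real p - real p*real p - real p
            \<le> real p * (real r - real d + 2*real p)"
      proof -
        have "real p * real p \<ge> 0" by simp
        moreover have "real p * (real r - real d + 2*real p) = real p*real r - real p*real d + 2*real p*real p"
          by (simp add: algebra_simps)
        ultimately show ?thesis using dr' pp by linarith
      qed
      then have "real p * (real r + 1 - ((real p - 2)*real t + real s)) \<le> real p * (real r - real d + 2*real p)"
        using K by linarith
      then show ?thesis using pp by simp
    qed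
    finally show ?thesis unfolding E m .
  qed
qed



lemma powr_step:
  assumes "N \<le> q ^ m" "real m \<le> E" "q \<ge> (1::nat)"
  shows "real N \<le> real q powr E"
proof -
  have "real N \<le> real q ^ m" using assms(1) by (metis of_nat_le_iff of_nat_power)
  also have "\<dots> = real q powr real m" using assms(3) by (simp add: powr_realpow)
  also have "\<dots> \<le> real q powr E" using assms by (intro powr_mono) auto
  finally show ?thesis .
qed

theorem mainTheorem15:
  fixes Q :: "'a :: {field, finite} poly"
    and p q r :: nat
  assumes "prime p" and "p > 2"
    and "CHAR('a) = p"
    and "card (UNIV :: 'a set) = q"
    and "\<exists>k. q = p ^ k"
    and "Q \<noteq> 0" and "squarefree Q"
    and "r \<ge> 1"
  shows "(degree Q < r \<and> r < 2 * degree Q \<longrightarrow>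
           real (card {c :: 'a poly. degree c \<le> r \<and> Q dvd pderiv c})
             \<le> real q powr (real r / 2 + (1/2 - 1 / real p) * (real r - 2 * real (degree Q)) + 2 * real p))
       \<and> (r \<ge> 2 * degree Q \<longrightarrow>
           real (card {c :: 'a poly. degree c \<le> r \<and> Q dvd pderiv c})
             \<le> real q powr (real r / 2 + 1/2 * (real r - 2 * real (degree Q)) + 2 * real p))"
proof -
  define d where "d = degree Q"
  define T where "T = {c :: 'a poly. degree c \<le> r \<and> Q dvd pderiv c}"
  have p3: "p \<ge> 3" using assms(2) by simp
  have p0: "p > 0" using p3 by simp
  have q1: "q \<ge> 1" using assms(4) finite_UNIV_card_ge_0[where 'a='a] by simp
  have fP: "finite {c::'a poly. degree c \<le> r}" and cP: "card {c::'a poly. degree c \<le> r} = q ^ Suc r"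
    unfolding degree_le_suppset using finite_suppset[of "{..r}", where 'a='a] card_suppset[of "{..r}", where 'a='a] assms(4) by auto
  have triv: "card T \<le> q ^ (r + 1)"
  proof -
    have "card T \<le> card {c::'a poly. degree c \<le> r}" unfolding T_def by (rule card_mono[OF fP]) auto
    then show ?thesis using cP by simp
  qed
  define t where "t = d div p"
  define s where "s = (r + 1) div p"
  define \<rho> where "\<rho> = min d ((p-1)*t + (s-t))"
  have ht: "d < p*(t+1)"
  proof -
    have "d = p * t + d mod p" unfolding t_def by simp
    moreover have "d mod p < p" using p0 by simp
    ultimately show ?thesis by simp
  qed
  have hs: "r + 1 < p*(s+1)"
  proof -
    have "r + 1 = p * s + (r + 1) mod p" unfolding s_def by simp
    moreover have "(r + 1) mod p < p" using p0 by simp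
    ultimately show ?thesis by simp
  qed
  have key: "card T \<le> q ^ (r + 1 - \<rho>)" if dp: "p \<le> d" and dr: "d \<le> r"
  proof -
    have t1: "t \<ge> 1"
    proof -
      have "p div p \<le> d div p" using dp by (rule div_le_mono)
      then show ?thesis unfolding t_def using p0 by simp
    qed
    have ts: "t \<le> s" unfolding t_def s_def using dr by (simp add: div_le_mono)
    have d1: "degree Q \<ge> 1" using dp p0 d_def by simp
    obtain u v where bez: "u*Q + v*pderiv Q = 1"
      using sqf_bezout_pderiv[OF assms(1,3,7,6)] by blast
    have L: "min (q ^ d) (card (Yset Q p (t-1)) * q ^ ((s-1) - (t-1))) \<le> card (Yset Q p (s-1))"
      using Y_lower[OF d1 assms(3) p0 bez, of "t-1" "s-1"] ts assms(4) d_def by simp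
    have I: "q ^ ((p-1) * t) \<le> card (Yset Q p (t-1))"
    proof -
      have "p * Suc (t - 1) \<le> degree Q" using t1 d_def t_def by simp
      then show ?thesis using Y_init[OF assms(3,1)] t1 assms(4) by fastforce
    qed
    have mA: "q ^ ((p-1)*t) * q ^ ((s-1) - (t-1)) \<le> card (Yset Q p (t-1)) * q ^ ((s-1) - (t-1))"
      using I by (rule mult_le_mono1)
    have eB: "q ^ ((p-1)*t) * q ^ ((s-1) - (t-1)) = q ^ ((p-1)*t + (s-t))"
    proof -
      have "(s-1) - (t-1) = s - t" using t1 ts by simp
      then show ?thesis by (simp add: power_add)
    qed
    have "q ^ ((p-1)*t + (s-t)) \<le> card (Yset Q p (t-1)) * q ^ ((s-1) - (t-1))" using mA unfolding eB .
    then have "min (q ^ d) (q ^ ((p-1)*t + (s-t))) \<le> min (q ^ d) (card (Yset Q p (t-1)) * q ^ ((s-1) - (t-1)))"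
      by (intro min.mono) simp_all
    then have "min (q ^ d) (q ^ ((p-1)*t + (s-t))) \<le> card (Yset Q p (s-1))"
      using L by (rule order_trans)
    moreover have "min (q ^ d) (q ^ ((p-1)*t + (s-t))) = q ^ \<rho>"
    proof (cases "d \<le> (p-1)*t + (s-t)")
      case True
      then have "q ^ d \<le> q ^ ((p-1)*t + (s-t))" using q1 by (rule power_increasing)
      then show ?thesis unfolding \<rho>_def using True by (simp add: min_def)
    next
      case False
      then have "q ^ ((p-1)*t + (s-t)) \<le> q ^ d" using q1 by (intro power_increasing) auto
      then show ?thesis unfolding \<rho>_def using False by (simp add: min_def)
    qed
    ultimately have Y: "q ^ \<rho> \<le> card (Yset Q p (s-1))" by simp
    have sub: "Yset Q p (s-1) \<subseteq> (\<lambda>c. pderiv c mod Q) ` {c. degree c \<le> r}"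
    proof -
      have s1: "Suc (s - 1) = s" using t1 ts by simp
      have "(r + 1) div p * p \<le> r + 1" by (rule div_times_less_eq_dividend)
      then have "p * s \<le> r + 1" unfolding s_def by (simp add: mult.commute)
      then have "p * Suc (s - 1) \<le> r + 1" by (simp only: s1)
      then show ?thesis unfolding Yset_def by (intro image_mono) auto
    qed
    have "card (Yset Q p (s-1)) \<le> card ((\<lambda>c. pderiv c mod Q) ` {c. degree c \<le> r})"
      by (rule card_mono[OF finite_imageI[OF fP] sub])
    with Y have Y2: "q ^ \<rho> \<le> card ((\<lambda>c. pderiv c mod Q) ` {c. degree c \<le> r})" by simp
    have C: "card T * card ((\<lambda>c. pderiv c mod Q) ` {c. degree c \<le> r}) \<le> q ^ Suc r"
      using card_T[of r Q] assms(4) unfolding T_def by simp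
    have "card T * q ^ \<rho> \<le> card T * card ((\<lambda>c. pderiv c mod Q) ` {c. degree c \<le> r})"
      using Y2 by (rule mult_le_mono2)
    then have CT: "card T * q ^ \<rho> \<le> q ^ Suc r" using C by (rule order_trans)
    have rle: "\<rho> \<le> r + 1" using dr unfolding \<rho>_def by simp
    have E1: "q ^ Suc r = q ^ (r + 1 - \<rho>) * q ^ \<rho>"
    proof -
      have "Suc r = (r + 1 - \<rho>) + \<rho>" using rle by simp
      then show ?thesis by (metis power_add)
    qed
    have "card T * q ^ \<rho> \<le> q ^ (r + 1 - \<rho>) * q ^ \<rho>" using CT unfolding E1 .
    moreover have "q ^ \<rho> > 0" using q1 by simp
    ultimately show ?thesis by (rule mult_le_cancel2[THEN iffD1, rule_format])
  qed
  show ?thesis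
  proof (intro conjI impI)
    assume c1: "degree Q < r \<and> r < 2 * degree Q"
    show "real (card {c :: 'a poly. degree c \<le> r \<and> Q dvd pderiv c})
             \<le> real q powr (real r / 2 + (1/2 - 1 / real p) * (real r - 2 * real (degree Q)) + 2 * real p)"
    proof (cases "p \<le> d")
      case True
      have "real (r + 1 - \<rho>) \<le> real r / 2 + (1/2 - 1 / real p) * (real r - 2 * real d) + 2 * real p"
        unfolding \<rho>_def by (rule num_case1) (use p3 c1 d_def ht hs in \<open>auto simp: t_def s_def div_le_mono\<close>)
      then show ?thesis using powr_step[OF key[OF True] _ q1] c1 d_def T_def by simp
    next
      case False
      have "real (r + 1) \<le> real r / 2 + (1/2 - 1 / real p) * (real r - 2 * real d) + 2 * real p"
      proof -
        have E: "real r / 2 + (1/2 - 1 / real p) * (real r - 2 * real d) + 2 * real p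
           = (real r - real d) + (2*real d - real r)/real p + 2*real p" by (rule rhs1_eq) (use p0 in simp)
        have "(2*real d - real r)/real p \<ge> 0" using c1 d_def by simp
        moreover have "real d < real p" using False by simp
        moreover have "real p \<ge> 3" using p3 by simp
        ultimately show ?thesis unfolding E by simp
      qed
      then show ?thesis using powr_step[OF triv _ q1] d_def T_def by simp
    qed
  next
    assume c2: "r \<ge> 2 * degree Q"
    show "real (card {c :: 'a poly. degree c \<le> r \<and> Q dvd pderiv c})
             \<le> real q powr (real r / 2 + 1/2 * (real r - 2 * real (degree Q)) + 2 * real p)"
    proof (cases "p \<le> d")
      case True
      have "real (r + 1 - \<rho>) \<le> real r / 2 + 1/2 * (real r - 2 * real d) + 2 * real p"
        unfolding \<rho>_def by (rule num_case2) (use p3 c2 d_def ht hs in \<open>auto simp: t_def s_def div_le_mono\<close>)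
      moreover have "d \<le> r" using c2 d_def by simp
      ultimately show ?thesis using powr_step[OF key[OF True] _ q1] d_def T_def by simp
    next
      case False
      have "real (r + 1) \<le> real r / 2 + 1/2 * (real r - 2 * real d) + 2 * real p"
        using False p3 by (simp add: field_simps)
      then show ?thesis using powr_step[OF triv _ q1] d_def T_def by simp
    qed
  qed
qed


end
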